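(* Let $A$ be a C*-algebra, $K$ an arbitrary set, and $\tau_g:A\to A$ a $*$-homomorphism for each $g\in K$. Assume that $A$ is generated (as a C*-algebra, i.e. $p(\mathfrak{V})$ is dense in $A$) by a subset $\mathfrak{V}\subset A$ for which $\tau_g(\mathfrak{V})\subset p(\mathfrak{V})$ for every $g\in K$. Also assume that $\{\tau_g(a):g\in K\}$ is totally bounded in $A$ (in norm) for every $a\in\mathfrak{V}$. Then $\{\tau_g(a):g\in K\}$ is totally bounded in $A$ for every $a\in A$.
   Context: For $\mathfrak{V}\subset A$, $p(\mathfrak{V})$ denotes the set of all finite complex linear combinations of finite products of elements of $\mathfrak{V}\cup\mathfrak{V}^*$, where $\mathfrak{V}^*=\{a^*:a\in\mathfrak{V}\}$. A set $B$ is totally bounded if for every $\varepsilon>0$ there is a finite set $F$ such that every element of $B$ is within distance $\varepsilon$ of some element of $F$. *)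

theory Defs
  imports "HOL-Analysis.Analysis"
begin

text \<open>C*-algebras (not necessarily unital): complete normed complex algebras with an
  involution satisfying the C*-identity.\<close>

class cstar_algebra = real_normed_algebra + banach +
  fixes scaleC :: "complex \<Rightarrow> 'a \<Rightarrow> 'a"
    and cstar :: "'a \<Rightarrow> 'a"
  assumes scaleC_add_right: "scaleC c (x + y) = scaleC c x + scaleC c y"
    and scaleC_add_left: "scaleC (c + d) x = scaleC c x + scaleC d x"
    and scaleC_scaleC: "scaleC c (scaleC d x) = scaleC (c * d) x"
    and scaleC_one: "scaleC 1 x = x"
    and scaleR_scaleC: "scaleR r x = scaleC (complex_of_real r) x"
    and norm_scaleC: "norm (scaleC c x) = cmod c * norm x"
    and mult_scaleC_left: "scaleC c x * y = scaleC c (x * y)"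
    and mult_scaleC_right: "x * scaleC c y = scaleC c (x * y)"
    and cstar_cstar: "cstar (cstar x) = x"
    and cstar_add: "cstar (x + y) = cstar x + cstar y"
    and cstar_scaleC: "cstar (scaleC c x) = scaleC (cnj c) (cstar x)"
    and cstar_mult: "cstar (x * y) = cstar y * cstar x"
    and cstar_identity: "norm (cstar x * x) = norm x ^ 2"

definition star_hom :: "('a::cstar_algebra \<Rightarrow> 'a) \<Rightarrow> bool" where
  "star_hom f \<longleftrightarrow>
     (\<forall>x y. f (x + y) = f x + f y) \<and>
     (\<forall>c x. f (scaleC c x) = scaleC c (f x)) \<and>
     (\<forall>x y. f (x * y) = f x * f y) \<and>
     (\<forall>x. f (cstar x) = cstar (f x))"

fun nlprod :: "'a::times list \<Rightarrow> 'a" where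
  "nlprod [] = undefined"
| "nlprod [x] = x"
| "nlprod (x # y # xs) = x * nlprod (y # xs)"

definition monomials :: "'a::cstar_algebra set \<Rightarrow> 'a set" where
  "monomials V = {nlprod xs | xs. xs \<noteq> [] \<and> set xs \<subseteq> V \<union> cstar ` V}"

definition pset :: "'a::cstar_algebra set \<Rightarrow> 'a set" where
  "pset V = {\<Sum>m\<in>F. scaleC (c m) m | F c. finite F \<and> F \<subseteq> monomials V}"

end

theory Submission imports Defs begin

lemma scaleC_zero_left[simp]: "scaleC 0 (x::'a::cstar_algebra) = 0"
  using scaleR_scaleC[of 0 x] by simp

lemma scaleC_neg_left: "scaleC (-c) (x::'a::cstar_algebra) = - scaleC c x"
proof -
  have "scaleC (-c) x + scaleC c x = 0" using scaleC_add_left[of "-c" c x] by simp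
  thus ?thesis by (simp add: eq_neg_iff_add_eq_0)
qed

lemma cstar_zero[simp]: "cstar (0::'a::cstar_algebra) = 0"
  using cstar_add[of "0::'a" 0] by simp

lemma cstar_minus: "cstar ((x::'a::cstar_algebra) - y) = cstar x - cstar y"
  using cstar_add[of "x - y" y] by (simp add: eq_diff_eq)

lemma cstar_scaleR: "cstar (r *\<^sub>R (x::'a::cstar_algebra)) = r *\<^sub>R cstar x"
  by (simp add: scaleR_scaleC cstar_scaleC)

lemma norm_cstar_le: "norm (x::'a::cstar_algebra) \<le> norm (cstar x)"
proof (cases "x = 0")
  case True thus ?thesis by simp
next
  case False
  have "norm x ^ 2 \<le> norm (cstar x) * norm x"
    using cstar_identity[of x] norm_mult_ineq[of "cstar x" x] by simp
  moreover have "norm x > 0" using False by simp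
  ultimately show ?thesis by (simp add: power2_eq_square)
qed

lemma norm_cstar[simp]: "norm (cstar (x::'a::cstar_algebra)) = norm x"
  using norm_cstar_le[of x] norm_cstar_le[of "cstar x"] cstar_cstar[of x] by simp

lemma bounded_linear_cstar: "bounded_linear (cstar :: 'a::cstar_algebra \<Rightarrow> 'a)"
  by (rule bounded_linear_intro[where K=1]) (auto simp: cstar_add cstar_scaleR)

lemma bounded_linear_scaleC: "bounded_linear (scaleC c :: 'a::cstar_algebra \<Rightarrow> 'a)"
  by (rule bounded_linear_intro[where K="cmod c"])
     (auto simp: scaleC_add_right scaleR_scaleC scaleC_scaleC norm_scaleC mult.commute)

lemma star_hom_zero: "star_hom f \<Longrightarrow> f 0 = 0"
  unfolding star_hom_def by (metis add_cancel_left_left add_0)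

lemma star_hom_diff: "star_hom f \<Longrightarrow> f (x - y) = f x - f y"
  unfolding star_hom_def by (metis diff_add_cancel eq_diff_eq)

lemma star_hom_scaleR: "star_hom f \<Longrightarrow> f (r *\<^sub>R x) = r *\<^sub>R f x"
  unfolding star_hom_def by (simp add: scaleR_scaleC)

lemma N3:
  fixes s m :: "'a::cstar_algebra"
  assumes "cstar s = s" "cstar m = m" "s * m = m * s"
  shows "norm s ^ 2 \<le> norm (s * s + m * m)"
proof -
  define z where "z = s + scaleC \<i> m"
  have cz: "cstar z = s - scaleC \<i> m"
    using assms by (simp add: z_def cstar_add cstar_scaleC scaleC_neg_left)
  have "cstar z * z = s * s + s * scaleC \<i> m - scaleC \<i> m * s - scaleC \<i> m * scaleC \<i> m"
    unfolding cz by (simp add: z_def algebra_simps)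
  also have "\<dots> = s * s + m * m"
    using assms(3) by (simp add: mult_scaleC_left mult_scaleC_right scaleC_scaleC scaleC_one scaleC_neg_left[symmetric])
  finally have e: "norm z ^ 2 = norm (s * s + m * m)" using cstar_identity[of z] by simp
  have "z + cstar z = 2 *\<^sub>R s" unfolding cz by (simp add: z_def scaleR_2)
  hence "2 * norm s \<le> norm z + norm (cstar z)"
    by (metis norm_scaleR norm_triangle_ineq abs_numeral)
  hence "norm s \<le> norm z" by simp
  hence "norm s ^ 2 \<le> norm z ^ 2" by (simp add: power_mono)
  thus ?thesis using e by simp
qed


lemma fixpt:
  fixes h :: "'a::cstar_algebra"
  assumes hs: "cstar h = h" and hn: "norm h \<le> 1/2"
  shows "\<exists>k. norm k \<le> 1/2 \<and> cstar k = k \<and> k * h = h * k \<and> k + k = h * h + k * k"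
proof -
  define S where "S = {k::'a. norm k \<le> 1/2 \<and> cstar k = k \<and> k * h = h * k}"
  define f where "f k = (1/2::real) *\<^sub>R (h * h + k * k)" for k
  have cc: "continuous_on UNIV (cstar :: 'a \<Rightarrow> 'a)"
    using bounded_linear_cstar linear_continuous_on by blast
  have "closed S" unfolding S_def
    apply (intro closed_Collect_conj closed_Collect_le closed_Collect_eq)
    by (auto intro!: continuous_intros cc)
  hence cS: "complete S" by (simp add: complete_eq_closed)
  have "0 \<in> S" unfolding S_def by simp
  have hh: "norm (h * h) \<le> 1/4"
  proof -
    have "norm h * norm h \<le> 1/2 * (1/2)" using hn by (intro mult_mono) auto
    thus ?thesis using norm_mult_ineq[of h h] by simp
  qed
  have fS: "f ` S \<subseteq> S"
  proof
    fix y assume "y \<in> f ` S"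
    then obtain k where k: "k \<in> S" "y = f k" by auto
    have kn: "norm k \<le> 1/2" using k unfolding S_def by simp
    have "norm k * norm k \<le> 1/2 * (1/2)" using kn by (intro mult_mono) auto
    hence kk: "norm (k * k) \<le> 1/4" using norm_mult_ineq[of k k] by simp
    have "norm y \<le> 1/2" using k(2) unfolding f_def
      using norm_triangle_ineq[of "h*h" "k*k"] hh kk by simp
    moreover have "cstar y = y" using k unfolding f_def S_def
      by (simp add: cstar_scaleR cstar_add cstar_mult hs)
    moreover have "y * h = h * y"
    proof -
      have kh: "k * h = h * k" using k unfolding S_def by simp
      have "k * k * h = k * (k * h)" by (rule mult.assoc)
      also have "\<dots> = k * (h * k)" by (simp only: kh)
      also have "\<dots> = k * h * k" by (rule mult.assoc[symmetric])
      also have "\<dots> = h * k * k" by (simp only: kh)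
      also have "\<dots> = h * (k * k)" by (rule mult.assoc)
      finally have e1: "k * k * h = h * (k * k)" .
      have e2: "h * h * h = h * (h * h)" by (simp add: mult.assoc)
      have e3: "(h * h + k * k) * h = h * (h * h + k * k)"
        by (simp only: distrib_left distrib_right e1 e2)
      show ?thesis unfolding k(2) f_def by (simp only: mult_scaleR_left mult_scaleR_right e3)
    qed
    ultimately show "y \<in> S" unfolding S_def by simp
  qed
  have lip: "dist (f x) (f y) \<le> 1/2 * dist x y" if "x \<in> S" "y \<in> S" for x y
  proof -
    have xn: "norm x \<le> 1/2" and yn: "norm y \<le> 1/2" using that unfolding S_def by auto
    have d: "x * (x - y) + (x - y) * y = x * x - y * y" by (simp add: algebra_simps)
    have "f x - f y = (1/2::real) *\<^sub>R (x * x - y * y)"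
      unfolding f_def by (simp add: scaleR_diff_right[symmetric])
    hence "dist (f x) (f y) = 1/2 * norm (x * (x - y) + (x - y) * y)"
      by (simp add: dist_norm d)
    also have "\<dots> \<le> 1/2 * (norm x * norm (x - y) + norm (x - y) * norm y)"
      using norm_triangle_ineq[of "x * (x - y)" "(x - y) * y"] norm_mult_ineq[of x "x - y"]
        norm_mult_ineq[of "x - y" y] by simp
    also have "\<dots> \<le> 1/2 * (1/2 * norm (x - y) + norm (x - y) * (1/2))"
    proof -
      have "norm x * norm (x - y) \<le> 1/2 * norm (x - y)" by (rule mult_right_mono[OF xn]) simp
      moreover have "norm (x - y) * norm y \<le> norm (x - y) * (1/2)" by (rule mult_left_mono[OF yn]) simp
      ultimately show ?thesis by simp
    qed
    finally show ?thesis by (simp add: dist_norm)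
  qed
  have ne: "S \<noteq> {}" using \<open>0 \<in> S\<close> by auto
  have "\<exists>!x\<in>S. f x = x" by (rule Banach_fix[OF cS ne _ _ fS lip]) auto
  then obtain k where "k \<in> S" "f k = k" by auto
  moreover have "k + k = h * h + k * k"
  proof -
    have "k + k = 2 *\<^sub>R ((1/2::real) *\<^sub>R (h * h + k * k))"
      using \<open>f k = k\<close> unfolding f_def by (simp add: scaleR_2)
    thus ?thesis by simp
  qed
  ultimately show ?thesis unfolding S_def by blast
qed


lemma bound_sa:
  fixes f :: "'a::cstar_algebra \<Rightarrow> 'a"
  assumes f: "star_hom f" and hs: "cstar h = h" and hn: "norm h \<le> 1/2"
  shows "norm (f h) \<le> 2"
proof -
  obtain k where k: "cstar k = k" "k * h = h * k" "k + k = h * h + k * k"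
    using fixpt[OF hs hn] by blast
  define s where "s = f h"
  define m where "m = f k"
  have ss: "cstar s = s" using f hs unfolding s_def star_hom_def by metis
  have ms: "cstar m = m" using f k(1) unfolding m_def star_hom_def by metis
  have c: "s * m = m * s" using f k(2) unfolding m_def s_def star_hom_def by metis
  have e: "m + m = s * s + m * m" using f k(3) unfolding m_def s_def star_hom_def by metis
  have "norm m ^ 2 \<le> norm (m * m + s * s)" using N3[OF ms ss c[symmetric]] .
  also have "\<dots> = 2 * norm m"
  proof -
    have "m * m + s * s = 2 *\<^sub>R m" using e by (simp add: scaleR_2 add.commute)
    thus ?thesis by simp
  qed
  finally have "norm m ^ 2 \<le> 2 * norm m" .
  hence mn: "norm m \<le> 2" by (cases "norm m = 0") (auto simp: power2_eq_square)
  have "norm s ^ 2 \<le> norm (s * s + m * m)" using N3[OF ss ms c] .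
  also have "\<dots> = 2 * norm m"
  proof -
    have "s * s + m * m = 2 *\<^sub>R m" using e by (simp add: scaleR_2)
    thus ?thesis by simp
  qed
  finally have "norm s ^ 2 \<le> 2 ^ 2" using mn by simp
  hence "norm s \<le> 2" by (rule power2_le_imp_le) simp
  thus ?thesis by (simp add: s_def)
qed

lemma bound_sa2:
  fixes f :: "'a::cstar_algebra \<Rightarrow> 'a"
  assumes f: "star_hom f" and hs: "cstar h = h"
  shows "norm (f h) \<le> 4 * norm h"
proof (cases "h = 0")
  case True thus ?thesis using star_hom_zero[OF f] by simp
next
  case False
  hence np: "norm h > 0" by simp
  define r where "r = 1 / (2 * norm h)"
  have rp: "r > 0" using np by (simp add: r_def)
  have "cstar (r *\<^sub>R h) = r *\<^sub>R h" by (simp add: cstar_scaleR hs)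
  moreover have "norm (r *\<^sub>R h) \<le> 1/2" using np by (simp add: r_def)
  ultimately have "norm (f (r *\<^sub>R h)) \<le> 2" by (rule bound_sa[OF f])
  hence "r * norm (f h) \<le> 2" using rp by (simp add: star_hom_scaleR[OF f])
  hence "norm (f h) \<le> 2 / r" using rp by (simp add: field_simps)
  thus ?thesis using np by (simp add: r_def)
qed

lemma bound:
  fixes f :: "'a::cstar_algebra \<Rightarrow> 'a"
  assumes f: "star_hom f"
  shows "norm (f a) \<le> 2 * norm a"
proof -
  have "norm (f a) ^ 2 = norm (cstar (f a) * f a)" by (simp add: cstar_identity)
  also have "\<dots> = norm (f (cstar a * a))" using f unfolding star_hom_def by simp
  also have "\<dots> \<le> 4 * norm (cstar a * a)"
    by (rule bound_sa2[OF f]) (simp add: cstar_mult cstar_cstar)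
  also have "\<dots> = (2 * norm a) ^ 2" by (simp add: cstar_identity power_mult_distrib)
  finally show ?thesis by (rule power2_le_imp_le) simp
qed


lemma tb_compact_closure:
  fixes S :: "'b::complete_space set"
  assumes "totally_bounded S"
  shows "compact (closure S)"
  unfolding compact_eq_totally_bounded
proof (intro conjI allI impI)
  show "complete (closure S)" by (simp add: complete_eq_closed)
  fix e :: real assume e: "e > 0"
  then obtain k where k: "finite k" "S \<subseteq> (\<Union>x\<in>k. {y. dist x y < e/2})"
    using assms unfolding totally_bounded_metric by (meson half_gt_zero)
  have "S \<subseteq> (\<Union>x\<in>k. cball x (e/2))" using k(2) by (force simp: mem_cball)
  moreover have "closed (\<Union>x\<in>k. cball x (e/2))" using k(1) by (intro closed_UN) auto
  ultimately have "closure S \<subseteq> (\<Union>x\<in>k. cball x (e/2))" by (rule closure_minimal)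
  also have "\<dots> \<subseteq> (\<Union>x\<in>k. ball x e)" using e by (force simp: mem_cball mem_ball)
  finally show "\<exists>k. finite k \<and> closure S \<subseteq> (\<Union>x\<in>k. ball x e)" using k(1) by blast
qed

lemma tb_from_compact:
  fixes S :: "'b::metric_space set"
  assumes "compact C" "S \<subseteq> C"
  shows "totally_bounded S"
  unfolding totally_bounded_metric
proof (intro allI impI)
  fix e :: real assume "e > 0"
  then obtain k where "finite k" "C \<subseteq> (\<Union>x\<in>k. ball x e)"
    using assms(1) unfolding compact_eq_totally_bounded by blast
  thus "\<exists>k. finite k \<and> S \<subseteq> (\<Union>x\<in>k. {y. dist x y < e})"
    using assms(2) by (auto simp: ball_def)
qed

lemma tb_image:
  fixes S :: "'b::complete_space set" and g :: "'b \<Rightarrow> 'c::metric_space"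
  assumes "totally_bounded S" "continuous_on UNIV g"
  shows "totally_bounded (g ` S)"
proof -
  have "compact (g ` closure S)"
    using compact_continuous_image[OF continuous_on_subset[OF assms(2) subset_UNIV] tb_compact_closure[OF assms(1)]] .
  thus ?thesis by (rule tb_from_compact) (use closure_subset in blast)
qed

lemma tb_image2:
  fixes S T :: "'b::complete_space set" and g :: "'b \<times> 'b \<Rightarrow> 'c::metric_space"
  assumes "totally_bounded S" "totally_bounded T" "continuous_on UNIV g"
  shows "totally_bounded (g ` (S \<times> T))"
proof -
  have "compact (closure S \<times> closure T)"
    using tb_compact_closure[OF assms(1)] tb_compact_closure[OF assms(2)] by (rule compact_Times)
  hence "compact (g ` (closure S \<times> closure T))"
    using compact_continuous_image[OF continuous_on_subset[OF assms(3) subset_UNIV]] by blast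
  thus ?thesis by (rule tb_from_compact) (use closure_subset in blast)
qed

definition Fam :: "('k \<Rightarrow> 'a \<Rightarrow> 'a) \<Rightarrow> 'k set \<Rightarrow> 'a \<Rightarrow> 'a set" where
  "Fam \<tau> K a = (\<lambda>g. \<tau> g a) ` K"

context
  fixes \<tau> :: "'k \<Rightarrow> 'a::cstar_algebra \<Rightarrow> 'a" and K :: "'k set"
  assumes H: "\<forall>g\<in>K. star_hom (\<tau> g)"
begin

lemma Fam_mult:
  assumes "totally_bounded (Fam \<tau> K x)" "totally_bounded (Fam \<tau> K y)"
  shows "totally_bounded (Fam \<tau> K (x * y))"
proof -
  have "Fam \<tau> K (x * y) \<subseteq> (\<lambda>p. fst p * snd p) ` (Fam \<tau> K x \<times> Fam \<tau> K y)"
    using H unfolding Fam_def star_hom_def by (auto intro!: image_eqI)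
  moreover have "totally_bounded ((\<lambda>p. fst p * snd p) ` (Fam \<tau> K x \<times> Fam \<tau> K y))"
    by (rule tb_image2[OF assms]) (intro continuous_intros)
  ultimately show ?thesis by (rule totally_bounded_subset[rotated])
qed

lemma Fam_add:
  assumes "totally_bounded (Fam \<tau> K x)" "totally_bounded (Fam \<tau> K y)"
  shows "totally_bounded (Fam \<tau> K (x + y))"
proof -
  have "Fam \<tau> K (x + y) \<subseteq> (\<lambda>p. fst p + snd p) ` (Fam \<tau> K x \<times> Fam \<tau> K y)"
    using H unfolding Fam_def star_hom_def by (auto intro!: image_eqI)
  moreover have "totally_bounded ((\<lambda>p. fst p + snd p) ` (Fam \<tau> K x \<times> Fam \<tau> K y))"
    by (rule tb_image2[OF assms]) (intro continuous_intros)
  ultimately show ?thesis by (rule totally_bounded_subset[rotated])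
qed

lemma Fam_scaleC:
  assumes "totally_bounded (Fam \<tau> K x)"
  shows "totally_bounded (Fam \<tau> K (scaleC c x))"
proof -
  have "Fam \<tau> K (scaleC c x) \<subseteq> scaleC c ` Fam \<tau> K x"
    using H unfolding Fam_def star_hom_def by auto
  moreover have "totally_bounded (scaleC c ` Fam \<tau> K x)"
    by (rule tb_image[OF assms]) (rule linear_continuous_on[OF bounded_linear_scaleC])
  ultimately show ?thesis by (rule totally_bounded_subset[rotated])
qed

lemma Fam_cstar:
  assumes "totally_bounded (Fam \<tau> K x)"
  shows "totally_bounded (Fam \<tau> K (cstar x))"
proof -
  have "Fam \<tau> K (cstar x) \<subseteq> cstar ` Fam \<tau> K x"
    using H unfolding Fam_def star_hom_def by auto
  moreover have "totally_bounded (cstar ` Fam \<tau> K x)"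
    by (rule tb_image[OF assms]) (rule linear_continuous_on[OF bounded_linear_cstar])
  ultimately show ?thesis by (rule totally_bounded_subset[rotated])
qed

lemma Fam_zero: "totally_bounded (Fam \<tau> K 0)"
proof -
  have "Fam \<tau> K 0 \<subseteq> {0}" using H star_hom_zero unfolding Fam_def by auto
  moreover have "totally_bounded {0::'a}" by (rule tb_from_compact[of "{0}"]) auto
  ultimately show ?thesis by (rule totally_bounded_subset[rotated])
qed

lemma Fam_nlprod:
  assumes V: "\<forall>a\<in>V. totally_bounded (Fam \<tau> K a)"
  shows "xs \<noteq> [] \<Longrightarrow> set xs \<subseteq> V \<union> cstar ` V \<Longrightarrow> totally_bounded (Fam \<tau> K (nlprod xs))"
proof (induction xs rule: nlprod.induct)
  case 1 thus ?case by simp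
next
  case (2 x)
  thus ?case using V Fam_cstar by auto
next
  case (3 x y xs)
  have "totally_bounded (Fam \<tau> K x)" using 3(3) V Fam_cstar by auto
  moreover have "totally_bounded (Fam \<tau> K (nlprod (y # xs)))" using 3 by auto
  ultimately show ?case by (simp add: Fam_mult)
qed

lemma Fam_pset:
  assumes V: "\<forall>a\<in>V. totally_bounded (Fam \<tau> K a)" and a: "a \<in> pset V"
  shows "totally_bounded (Fam \<tau> K a)"
proof -
  obtain F c where F: "finite F" "F \<subseteq> monomials V" "a = (\<Sum>m\<in>F. scaleC (c m) m)"
    using a unfolding pset_def by blast
  have mon: "totally_bounded (Fam \<tau> K m)" if "m \<in> monomials V" for m
    using that Fam_nlprod[OF V] unfolding monomials_def by blast
  have "F \<subseteq> monomials V \<Longrightarrow> totally_bounded (Fam \<tau> K (\<Sum>m\<in>F. scaleC (c m) m))"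
    using F(1)
  proof (induction F rule: finite_induct)
    case empty thus ?case by (simp add: Fam_zero)
  next
    case (insert x F)
    thus ?case by (simp add: Fam_add Fam_scaleC mon)
  qed
  thus ?thesis using F by simp
qed

end

theorem proposition5p3:
  fixes \<tau> :: "'k \<Rightarrow> 'a::cstar_algebra \<Rightarrow> 'a"
    and K :: "'k set"
    and V :: "'a set"
  assumes "\<forall>g\<in>K. star_hom (\<tau> g)"
    and "closure (pset V) = UNIV"
    and "\<forall>g\<in>K. \<tau> g ` V \<subseteq> pset V"
    and "\<forall>a\<in>V. totally_bounded ((\<lambda>g. \<tau> g a) ` K)"
  shows "\<forall>a. totally_bounded ((\<lambda>g. \<tau> g a) ` K)"
proof
  fix a :: 'a
  have P: "totally_bounded (Fam \<tau> K b)" if "b \<in> pset V" for b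
    using Fam_pset[OF assms(1) _ that] assms(4) unfolding Fam_def by blast
  show "totally_bounded ((\<lambda>g. \<tau> g a) ` K)"
    unfolding totally_bounded_metric
  proof (intro allI impI)
    fix e :: real assume e: "e > 0"
    have "a \<in> closure (pset V)" using assms(2) by simp
    then obtain b where b: "b \<in> pset V" "dist b a < e/6"
      using e closure_approachable[of a "pset V"] by (meson divide_pos_pos zero_less_numeral)
    obtain k where k: "finite k" "Fam \<tau> K b \<subseteq> (\<Union>x\<in>k. {y. dist x y < e/2})"
      using P[OF b(1)] e unfolding totally_bounded_metric by (meson half_gt_zero)
    have "(\<lambda>g. \<tau> g a) ` K \<subseteq> (\<Union>x\<in>k. {y. dist x y < e})"
    proof
      fix z assume "z \<in> (\<lambda>g. \<tau> g a) ` K"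
      then obtain g where g: "g \<in> K" "z = \<tau> g a" by auto
      obtain x where x: "x \<in> k" "dist x (\<tau> g b) < e/2"
        using k(2) g(1) unfolding Fam_def by blast
      have "dist (\<tau> g b) (\<tau> g a) = norm (\<tau> g (b - a))"
        using star_hom_diff[of "\<tau> g" b a] assms(1) g(1) by (simp add: dist_norm)
      also have "\<dots> \<le> 2 * norm (b - a)" using bound assms(1) g(1) by blast
      also have "\<dots> < e/3" using b(2) by (simp add: dist_norm)
      finally have d1: "dist (\<tau> g b) z < e/3" using g(2) by simp
      have "dist x z \<le> dist x (\<tau> g b) + dist (\<tau> g b) z" by (rule dist_triangle)
      hence "dist x z < e" using d1 x(2) e by linarith
      thus "z \<in> (\<Union>x\<in>k. {y. dist x y < e})" using x(1) by blast
    qed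
    thus "\<exists>k. finite k \<and> (\<lambda>g. \<tau> g a) ` K \<subseteq> (\<Union>x\<in>k. {y. dist x y < e})" using k(1) by blast
  qed
qed

end
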